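(* Let $L$ be a linear continuum with endpoints, let $(f_i:i\in I)$ be an indiscernible sequence of single elements of $M_L$ of length at least $3$, let $i<j$ be elements of $I$, and let $(a,b)\in\mathrm{im}(f_i,f_j)$. Then either $(a,a)\in\mathrm{im}(f_i,f_j)$ or $(b,b)\in\mathrm{im}(f_i,f_j)$.
   Context: A linear continuum is a dense linear order with the least upper bound property; with endpoints means it has a least and greatest element. $M_L$ is the set of functions $f:L\to[0,1]$ that are nondecreasing, continuous in the order topology, with $\inf f=0$ and $\sup f=1$, with the sup metric, regarded as a metric structure in the language of binary predicates $\varphi_\alpha$ ($\alpha\in\mathbb{Q}\cap[0,1]$), where $\varphi_\alpha(f,g)=f(t)$ for any $t\in L$ with $f(t)+g(t)=\alpha$. $\mathrm{im}(f,g)=\{(f(t),g(t)):t\in L\}$. A sequence is indiscernible if every formula takes the same value on all increasing tuples from it. *)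

theory Defs
  imports "HOL-Analysis.Analysis"
begin

text \<open>A linear continuum with endpoints is modelled as a type L carrying its order
topology (class linorder_topology), which is densely ordered, has the least upper bound
property (conditionally complete), and has a least and a greatest element.\<close>

definition lin_cont_endpoints :: "'l::{linorder_topology, conditionally_complete_linorder} itself \<Rightarrow> bool" where
  "lin_cont_endpoints _ \<longleftrightarrow>
     (\<forall>x y::'l. x < y \<longrightarrow> (\<exists>z. x < z \<and> z < y)) \<and>
     (\<exists>lo hi::'l. \<forall>x. lo \<le> x \<and> x \<le> hi)"

definition M_space :: "('l::linorder_topology \<Rightarrow> real) set" where
  "M_space = {f. mono f \<and> continuous_on UNIV f \<and> (INF t. f t) = 0 \<and> (SUP t. f t) = 1}"

definition phiML :: "real \<Rightarrow> ('l \<Rightarrow> real) \<Rightarrow> ('l \<Rightarrow> real) \<Rightarrow> real" where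
  "phiML \<alpha> f g = f (SOME t. f t + g t = \<alpha>)"

definition distML :: "('l \<Rightarrow> real) \<Rightarrow> ('l \<Rightarrow> real) \<Rightarrow> real" where
  "distML f g = (SUP t. \<bar>f t - g t\<bar>)"

definition im :: "('l \<Rightarrow> real) \<Rightarrow> ('l \<Rightarrow> real) \<Rightarrow> (real \<times> real) set" where
  "im f g = {(f t, g t) | t. True}"

text \<open>Connectives: arbitrary continuous functions u : [0,1]^n -> [0,1] (applied to the values
of n subformulas, encoded as a function on nat that is 0 beyond n).\<close>

datatype form =
    Phi rat nat nat
  | Dist nat nat
  | Conn "(nat \<Rightarrow> real) \<Rightarrow> real" "form list"
  | FSup nat form
  | FInf nat form

fun eval :: "form \<Rightarrow> (nat \<Rightarrow> ('l::linorder_topology \<Rightarrow> real)) \<Rightarrow> real" where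
  "eval (Phi \<alpha> x y) e = phiML (real_of_rat \<alpha>) (e x) (e y)"
| "eval (Dist x y) e = distML (e x) (e y)"
| "eval (Conn u ps) e =
     (let vs = map (\<lambda>p. eval p e) ps in u (\<lambda>k. if k < length vs then vs ! k else 0))"
| "eval (FSup x p) e = (SUP g\<in>M_space. eval p (e(x := g)))"
| "eval (FInf x p) e = (INF g\<in>M_space. eval p (e(x := g)))"

fun fv :: "form \<Rightarrow> nat set" where
  "fv (Phi \<alpha> x y) = {x, y}"
| "fv (Dist x y) = {x, y}"
| "fv (Conn u ps) = \<Union> (set (map fv ps))"
| "fv (FSup x p) = fv p - {x}"
| "fv (FInf x p) = fv p - {x}"

fun wf_form :: "form \<Rightarrow> bool" where
  "wf_form (Phi \<alpha> x y) = (0 \<le> \<alpha> \<and> \<alpha> \<le> 1)"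
| "wf_form (Dist x y) = True"
| "wf_form (Conn u ps) =
     (continuous_on {v. \<forall>k. v k \<in> {0..1}} u \<and> (\<forall>v. (\<forall>k. v k \<in> {0..1}) \<longrightarrow> u v \<in> {0..1})
      \<and> list_all wf_form ps)"
| "wf_form (FSup x p) = wf_form p"
| "wf_form (FInf x p) = wf_form p"

definition indiscernible :: "('i::linorder \<Rightarrow> ('l::linorder_topology \<Rightarrow> real)) \<Rightarrow> bool" where
  "indiscernible f \<longleftrightarrow>
     (\<forall>\<phi> n (ii :: nat \<Rightarrow> 'i) js. wf_form \<phi> \<and> fv \<phi> \<subseteq> {..<n} \<and>
        strict_mono_on {..<n} ii \<and> strict_mono_on {..<n} js \<longrightarrow>
        eval \<phi> (\<lambda>k. f (ii k)) = eval \<phi> (\<lambda>k. f (js k)))"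

end

theory Submission
  imports Defs
begin


lemma M_facts:
  fixes f :: "'l::{linorder_topology, conditionally_complete_linorder} \<Rightarrow> real"
  assumes "f \<in> M_space" "\<forall>x. lo \<le> x \<and> x \<le> hi"
  shows "f lo = 0" "f hi = 1" "mono f" "continuous_on UNIV f" "0 \<le> f t" "f t \<le> 1"
proof -
  have m: "mono f" and c: "continuous_on UNIV f" and i: "(INF t. f t) = 0" and s: "(SUP t. f t) = 1"
    using assms(1) unfolding M_space_def by auto
  have "(INF t. f t) = f lo"
    by (rule cInf_eq_minimum) (use m assms(2) in \<open>auto simp: mono_def\<close>)
  then show l: "f lo = 0" using i by simp
  have "(SUP t. f t) = f hi"
    by (rule cSup_eq_maximum) (use m assms(2) in \<open>auto simp: mono_def\<close>)
  then show h: "f hi = 1" using s by simp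
  show "mono f" "continuous_on UNIV f" using m c by auto
  show "0 \<le> f t" using l m assms(2) by (metis monoD)
  show "f t \<le> 1" using h m assms(2) by (metis monoD)
qed

lemma ivt_sup:
  fixes g :: "'l::{linorder_topology, conditionally_complete_linorder} \<Rightarrow> real"
  assumes dense: "\<forall>x y::'l. x < y \<longrightarrow> (\<exists>z. x < z \<and> z < y)"
    and ends: "\<forall>x. lo \<le> x \<and> x \<le> hi"
    and m: "mono g" and c: "continuous_on UNIV g" and y1: "g lo \<le> y" and y2: "y \<le> g hi"
  shows "g (Sup {s. g s \<le> y}) = y" "\<And>s. g s \<le> y \<Longrightarrow> s \<le> Sup {s. g s \<le> y}"
proof -
  define X where "X = {s. g s \<le> y}"
  have ne: "X \<noteq> {}" using y1 X_def by auto
  have bdd: "bdd_above X" using ends unfolding bdd_above_def by auto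
  show up: "\<And>s. g s \<le> y \<Longrightarrow> s \<le> Sup {s. g s \<le> y}"
  proof -
    fix s assume "g s \<le> y"
    then have "s \<in> X" unfolding X_def by simp
    then show "s \<le> Sup {s. g s \<le> y}" using cSup_upper[OF _ bdd] unfolding X_def by simp
  qed
  define T where "T = Sup X"
  have le: "g T \<le> y"
  proof (rule ccontr)
    assume "\<not> g T \<le> y"
    then have gt: "g T > y" by simp
    have "T \<noteq> lo" using gt y1 by auto
    moreover have "lo \<le> T" using ends by simp
    ultimately have "lo < T" by (simp add: order_less_le)
    have "open (g -` {y<..})" by (rule open_vimage) (use c in auto)
    moreover have "T \<in> g -` {y<..}" using gt by simp
    ultimately obtain b where b: "b < T" "{b<..T} \<subseteq> g -` {y<..}" using open_left \<open>lo < T\<close> by blast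
    have "b < Sup X" using b T_def by simp
    then obtain s where s: "s \<in> X" "b < s" using less_cSup_iff[OF ne bdd] by blast
    have "s \<le> T" unfolding T_def using s(1) bdd by (rule cSup_upper)
    then have "s \<in> {b<..T}" using s(2) by simp
    then have "s \<in> g -` {y<..}" using b(2) by blast
    then have "g s > y" by simp
    then show False using s X_def by auto
  qed
  have ge: "g T \<ge> y"
  proof (rule ccontr)
    assume "\<not> g T \<ge> y"
    then have lt: "g T < y" by simp
    have "T \<noteq> hi" using lt y2 by auto
    moreover have "T \<le> hi" using ends by simp
    ultimately have "T < hi" by (simp add: order_less_le)
    have "open (g -` {..<y})" by (rule open_vimage) (use c in auto)
    moreover have "T \<in> g -` {..<y}" using lt by simp
    ultimately obtain b where b: "b > T" "{T..<b} \<subseteq> g -` {..<y}" using open_right \<open>T < hi\<close> by blast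
    then obtain z where z: "T < z" "z < b" using dense by blast
    then have "z \<in> {T..<b}" by simp
    then have "z \<in> g -` {..<y}" using b(2) by blast
    then have "g z < y" by simp
    then have "z \<in> X" unfolding X_def by simp
    then have "z \<le> T" unfolding T_def using bdd by (rule cSup_upper)
    then show False using z by auto
  qed
  show "g (Sup {s. g s \<le> y}) = y" using le ge unfolding T_def X_def by simp
qed

lemma phi_eq:
  fixes F h :: "'l::linorder \<Rightarrow> real"
  assumes "mono F" "mono h" "F s + h s = \<alpha>"
  shows "phiML \<alpha> F h = F s"
proof -
  define t where "t = (SOME t. F t + h t = \<alpha>)"
  have t: "F t + h t = \<alpha>" unfolding t_def by (rule someI) (rule assms(3))
  have "F t = F s"
  proof (cases "t \<le> s")
    case True
    then have "F t \<le> F s" "h t \<le> h s" using assms monoD by blast+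
    then show ?thesis using t assms(3) by linarith
  next
    case False
    then have "s \<le> t" by (simp add: not_le less_imp_le)
    then have "F s \<le> F t" "h s \<le> h t" using assms monoD by blast+
    then show ?thesis using t assms(3) by linarith
  qed
  then show ?thesis unfolding phiML_def t_def by simp
qed

lemma chain:
  fixes F G :: "'l::linorder \<Rightarrow> real"
  assumes "mono F" "mono G" "(x1,y1) \<in> im F G" "(x2,y2) \<in> im F G"
  shows "(x1 \<le> x2 \<and> y1 \<le> y2) \<or> (x2 \<le> x1 \<and> y2 \<le> y1)"
proof -
  obtain t1 t2 where "x1 = F t1" "y1 = G t1" "x2 = F t2" "y2 = G t2"
    using assms(3,4) unfolding im_def by auto
  moreover have "t1 \<le> t2 \<or> t2 \<le> t1" by (simp add: linear)
  ultimately show ?thesis using assms(1,2) monoD by blast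
qed




lemma charac:
  fixes F G :: "'l::{linorder_topology, conditionally_complete_linorder} \<Rightarrow> real"
    and lo hi :: 'l
  assumes dense: "\<forall>x y::'l. x < y \<longrightarrow> (\<exists>z. x < z \<and> z < y)"
    and ends: "\<forall>x. lo \<le> x \<and> x \<le> hi"
    and F: "F \<in> M_space" and G: "G \<in> M_space"
    and ab: "0 \<le> a" "a \<le> 1" "0 \<le> b" "b \<le> 1"
    and noU: "\<not> (\<exists>t. F t < a \<and> G t > b)"
    and noV: "\<not> (\<exists>t. F t > a \<and> G t < b)"
  shows "(a, b) \<in> im F G"
proof -
  note Ff = M_facts[OF F ends] and Gf = M_facts[OF G ends]
  define X where "X = {t. a \<le> F t \<and> b \<le> G t}"
  define T where "T = Inf X"
  have "hi \<in> X" using Ff(2) Gf(2) ab X_def by auto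
  then have ne: "X \<noteq> {}" by blast
  have bdd: "bdd_below X" using ends unfolding bdd_below_def by auto
  have lower: "T \<le> s" if "s \<in> X" for s unfolding T_def using that bdd by (rule cInf_lower)
  have Fge: "a \<le> F T"
  proof (rule ccontr)
    assume "\<not> a \<le> F T"
    then have lt: "F T < a" by simp
    have "T \<noteq> hi" using lt Ff(2) ab by auto
    moreover have "T \<le> hi" using ends by simp
    ultimately have "T < hi" by (simp add: order_less_le)
    have "open (F -` {..<a})" by (rule open_vimage) (use Ff(4) in auto)
    moreover have "T \<in> F -` {..<a}" using lt by simp
    ultimately obtain u where u: "u > T" "{T..<u} \<subseteq> F -` {..<a}" using open_right \<open>T < hi\<close> by blast
    have "Inf X < u" using u T_def by simp
    then obtain s where s: "s \<in> X" "s < u" using cInf_less_iff[OF ne bdd] by blast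
    have "T \<le> s" using lower s(1) by simp
    then have "s \<in> {T..<u}" using s(2) by simp
    then have "s \<in> F -` {..<a}" using u(2) by blast
    then show False using s(1) X_def by simp
  qed
  have Gge: "b \<le> G T"
  proof (rule ccontr)
    assume "\<not> b \<le> G T"
    then have lt: "G T < b" by simp
    have "T \<noteq> hi" using lt Gf(2) ab by auto
    moreover have "T \<le> hi" using ends by simp
    ultimately have "T < hi" by (simp add: order_less_le)
    have "open (G -` {..<b})" by (rule open_vimage) (use Gf(4) in auto)
    moreover have "T \<in> G -` {..<b}" using lt by simp
    ultimately obtain u where u: "u > T" "{T..<u} \<subseteq> G -` {..<b}" using open_right \<open>T < hi\<close> by blast
    have "Inf X < u" using u T_def by simp
    then obtain s where s: "s \<in> X" "s < u" using cInf_less_iff[OF ne bdd] by blast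
    have "T \<le> s" using lower s(1) by simp
    then have "s \<in> {T..<u}" using s(2) by simp
    then have "s \<in> G -` {..<b}" using u(2) by blast
    then show False using s(1) X_def by simp
  qed
  have Fle: "F T \<le> a"
  proof (rule ccontr)
    assume "\<not> F T \<le> a"
    then have gt: "F T > a" by simp
    have "T \<noteq> lo" using gt Ff(1) ab by auto
    moreover have "lo \<le> T" using ends by simp
    ultimately have "lo < T" by (simp add: order_less_le)
    have "open (F -` {a<..})" by (rule open_vimage) (use Ff(4) in auto)
    moreover have "T \<in> F -` {a<..}" using gt by simp
    ultimately obtain l where l: "l < T" "{l<..T} \<subseteq> F -` {a<..}" using open_left \<open>lo < T\<close> by blast
    then obtain z where z: "l < z" "z < T" using dense by blast
    then have "z \<in> {l<..T}" by simp
    then have Fz: "F z > a" using l(2) by blast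
    have "z \<notin> X" using lower z(2) by (meson not_le)
    then have "G z < b" using Fz X_def by auto
    then show False using noV Fz by blast
  qed
  have Gle: "G T \<le> b"
  proof (rule ccontr)
    assume "\<not> G T \<le> b"
    then have gt: "G T > b" by simp
    have "T \<noteq> lo" using gt Gf(1) ab by auto
    moreover have "lo \<le> T" using ends by simp
    ultimately have "lo < T" by (simp add: order_less_le)
    have "open (G -` {b<..})" by (rule open_vimage) (use Gf(4) in auto)
    moreover have "T \<in> G -` {b<..}" using gt by simp
    ultimately obtain l where l: "l < T" "{l<..T} \<subseteq> G -` {b<..}" using open_left \<open>lo < T\<close> by blast
    then obtain z where z: "l < z" "z < T" using dense by blast
    then have "z \<in> {l<..T}" by simp
    then have Gz: "G z > b" using l(2) by blast
    have "z \<notin> X" using lower z(2) by (meson not_le)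
    then have "F z < a" using Gz X_def by auto
    then show False using noU Gz by blast
  qed
  have "F T = a" "G T = b" using Fge Fle Gge Gle by auto
  then show ?thesis unfolding im_def by auto
qed

lemma core:
  fixes F G H :: "'l::{linorder_topology, conditionally_complete_linorder} \<Rightarrow> real"
    and lo hi :: 'l
  assumes dense: "\<forall>x y::'l. x < y \<longrightarrow> (\<exists>z. x < z \<and> z < y)"
    and ends: "\<forall>x. lo \<le> x \<and> x \<le> hi"
    and F: "F \<in> M_space" and G: "G \<in> M_space" and H: "H \<in> M_space"
    and T1: "im F H \<subseteq> im F G" and T2: "im G H \<subseteq> im F G"
    and ab: "(a, b) \<in> im F G" "a < b"
  shows "(a, a) \<in> im F G \<or> (b, b) \<in> im F G"
proof (rule ccontr)
  assume nc: "\<not> ?thesis"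
  note Ff = M_facts[OF F ends] and Gf = M_facts[OF G ends] and Hf = M_facts[OF H ends]
  obtain t1 where t1: "F t1 = a" "G t1 = b" using ab unfolding im_def by auto
  have a01: "0 \<le> a" "a \<le> 1" using t1 Ff by auto
  have "\<not> (\<forall>t. \<not> (F t < a \<and> G t > a)) \<or> \<not> (\<forall>t. \<not> (F t > a \<and> G t < a))"
    using charac[OF dense ends F G a01 a01] nc by blast
  moreover have "\<not> (F t > a \<and> G t < a)" for t
  proof
    assume "F t > a \<and> G t < a"
    moreover have "(F t, G t) \<in> im F G" unfolding im_def by auto
    ultimately show False using chain[OF Ff(3) Gf(3) _ ab(1), of "F t" "G t"] ab(2) by auto
  qed
  ultimately obtain t where t: "F t < a" "G t > a" by blast
  define x where "x = F t"
  define T where "T = Sup {s. F s \<le> x}"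
  have FT: "F T = x" unfolding T_def
    by (rule ivt_sup(1)[OF dense ends Ff(3) Ff(4)]) (use Ff x_def in auto)
  have upT: "s \<le> T" if "F s \<le> x" for s unfolding T_def
    by (rule ivt_sup(2)[OF dense ends Ff(3) Ff(4)]) (use Ff x_def that in auto)
  define M where "M = G T"
  have "t \<le> T" using upT x_def by simp
  then have My: "G t \<le> M" unfolding M_def using Gf(3) monoD by blast
  have "(x, H T) \<in> im F H" using FT unfolding im_def by auto
  then have "(x, H T) \<in> im F G" using T1 by blast
  then obtain t' where t': "F t' = x" "G t' = H T" unfolding im_def by auto
  then have "t' \<le> T" using upT by simp
  then have HM: "H T \<le> M" unfolding M_def using t' Gf(3) monoD by metis
  have "(M, H T) \<in> im G H" unfolding im_def M_def by auto
  then have MH: "(M, H T) \<in> im F G" using T2 by blast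
  have xM: "(x, M) \<in> im F G" unfolding im_def M_def using FT by auto
  have "x < M" using t x_def My by simp
  then have "M \<le> H T" using chain[OF Ff(3) Gf(3) xM MH] by auto
  then have "H T = M" using HM by simp
  then have MM: "(M, M) \<in> im F G" using MH by simp
  have "M > a" using t My by simp
  then have "b \<le> M" using chain[OF Ff(3) Gf(3) MM ab(1)] by auto
  moreover have "M \<le> b" using chain[OF Ff(3) Gf(3) xM ab(1)] t x_def by auto
  ultimately have "M = b" by simp
  then show False using MM nc by simp
qed




lemma ivt_ex:
  fixes g :: "'l::{linorder_topology, conditionally_complete_linorder} \<Rightarrow> real"
    and lo hi :: 'l
  assumes dense: "\<forall>x y::'l. x < y \<longrightarrow> (\<exists>z. x < z \<and> z < y)"
    and ends: "\<forall>x. lo \<le> x \<and> x \<le> hi"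
    and m: "mono g" and c: "continuous_on UNIV g" and y1: "g lo \<le> y" and y2: "y \<le> g hi"
  shows "\<exists>s. g s = y"
  using ivt_sup(1)[OF assms] by blast

lemma sum_M:
  fixes F h :: "'l::{linorder_topology, conditionally_complete_linorder} \<Rightarrow> real"
    and lo hi :: 'l
  assumes dense: "\<forall>x y::'l. x < y \<longrightarrow> (\<exists>z. x < z \<and> z < y)"
    and ends: "\<forall>x. lo \<le> x \<and> x \<le> hi"
    and F: "F \<in> M_space" and h: "h \<in> M_space" and al: "0 \<le> \<alpha>" "\<alpha> \<le> 2"
  shows "\<exists>s. F s + h s = \<alpha>"
proof -
  note Ff = M_facts[OF F ends] and hf = M_facts[OF h ends]
  have "mono (\<lambda>t. F t + h t)" using Ff(3) hf(3) by (simp add: mono_def add_mono)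
  moreover have "continuous_on UNIV (\<lambda>t. F t + h t)" using Ff(4) hf(4) by (intro continuous_intros)
  ultimately show ?thesis using ivt_ex[OF dense ends, of "\<lambda>t. F t + h t" \<alpha>] Ff hf al by auto
qed

lemma R_U:
  fixes F G h :: "'l::{linorder_topology, conditionally_complete_linorder} \<Rightarrow> real"
    and lo hi :: 'l
  assumes dense: "\<forall>x y::'l. x < y \<longrightarrow> (\<exists>z. x < z \<and> z < y)"
    and ends: "\<forall>x. lo \<le> x \<and> x \<le> hi"
    and F: "F \<in> M_space" and G: "G \<in> M_space" and h: "h \<in> M_space"
    and be: "0 \<le> \<beta>" "\<beta> \<le> 1"
    and gap: "phiML \<beta> G h - phiML 1 F h > \<beta> - 1"
  shows "\<exists>s. F s \<le> phiML 1 F h \<and> G s = phiML \<beta> G h"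
proof -
  note Ff = M_facts[OF F ends] and Gf = M_facts[OF G ends] and hf = M_facts[OF h ends]
  have "\<exists>s. F s + h s = 1" by (rule sum_M[OF dense ends F h]) auto
  then obtain s1 where s1: "F s1 + h s1 = 1" by blast
  have "\<exists>s. G s + h s = \<beta>" by (rule sum_M[OF dense ends G h]) (use be in auto)
  then obtain s2 where s2: "G s2 + h s2 = \<beta>" by blast
  have p: "phiML 1 F h = F s1" by (rule phi_eq[OF Ff(3) hf(3) s1])
  have q: "phiML \<beta> G h = G s2" by (rule phi_eq[OF Gf(3) hf(3) s2])
  have "h s2 < h s1" using gap p q s1 s2 by linarith
  then have "\<not> s1 \<le> s2" using hf(3) by (metis monoD not_le)
  then have "s2 \<le> s1" by simp
  then have "F s2 \<le> F s1" using Ff(3) monoD by blast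
  then show ?thesis using p q by auto
qed

lemma steep_U:
  fixes F G :: "'l::{linorder_topology, conditionally_complete_linorder} \<Rightarrow> real"
    and lo hi :: 'l
  assumes dense: "\<forall>x y::'l. x < y \<longrightarrow> (\<exists>z. x < z \<and> z < y)"
    and ends: "\<forall>x. lo \<le> x \<and> x \<le> hi"
    and F: "F \<in> M_space" and G: "G \<in> M_space"
    and t0: "F t0 < a" "\<beta> \<le> G t0" and ab: "b < \<beta>" "\<beta> \<le> 1" "a \<le> 1" "0 \<le> \<beta>"
  shows "\<exists>h\<in>M_space. phiML 1 F h < a \<and> b < phiML \<beta> G h \<and> phiML \<beta> G h - phiML 1 F h > \<beta> - 1"
proof -
  note Ff = M_facts[OF F ends] and Gf = M_facts[OF G ends]
  define x where "x = F t0"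
  define y where "y = G t0"
  define c where "c = x + y"
  define \<delta> where "\<delta> = min ((a - x) / 2) ((1 - x) / 2)"
  have x01: "0 \<le> x" "x < a" "x < 1" using Ff t0 ab x_def by auto
  have y01: "0 \<le> y" "y \<le> 1" using Gf y_def by auto
  have dpos: "\<delta> > 0" using x01 \<delta>_def by simp
  have "\<delta> \<le> (1 - x) / 2" unfolding \<delta>_def by (rule min.cobounded2)
  then have dle: "c + \<delta> \<le> 2" using x01 y01 c_def by (simp add: field_simps)
  define \<theta> where "\<theta> = (\<lambda>s::real. min 1 (max 0 ((s - c) / \<delta>)))"
  define h where "h = (\<lambda>t. \<theta> (F t + G t))"
  have thmono: "mono \<theta>"
  proof (rule monoI)
    fix u v :: real assume "u \<le> v"
    then have "(u - c) / \<delta> \<le> (v - c) / \<delta>" using dpos by (intro divide_right_mono) auto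
    then show "\<theta> u \<le> \<theta> v" unfolding \<theta>_def by (meson max.mono min.mono order_refl)
  qed
  have hmono: "mono h" unfolding h_def using thmono Ff(3) Gf(3)
    by (simp add: mono_def add_mono)
  have hcont: "continuous_on UNIV h" unfolding h_def \<theta>_def using Ff(4) Gf(4) dpos
    by (intro continuous_intros) auto
  have h01: "0 \<le> h t" "h t \<le> 1" for t unfolding h_def \<theta>_def by auto
  have hlo: "h lo = 0" unfolding h_def \<theta>_def using Ff(1) Gf(1) x01 y01 c_def dpos
    by (simp add: divide_nonpos_pos)
  have hhi: "h hi = 1" unfolding h_def \<theta>_def using Ff(2) Gf(2) dle dpos
    by (simp add: le_divide_eq)
  have hM: "h \<in> M_space"
  proof -
    have "(INF t. h t) = 0" by (rule cInf_eq_minimum) (use hlo h01 in \<open>auto intro: sym\<close>)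
    moreover have "(SUP t. h t) = 1" by (rule cSup_eq_maximum) (use hhi h01 in \<open>auto intro: sym\<close>)
    ultimately show ?thesis unfolding M_space_def using hmono hcont by auto
  qed
  have ht0: "h t0 = 0" unfolding h_def \<theta>_def using x_def y_def c_def by simp
  obtain s where s: "G s = \<beta>" using ivt_ex[OF dense ends Gf(3) Gf(4)] Gf ab by force
  obtain s' where s': "G s' = \<beta>" "s' \<le> t0"
  proof (cases "s \<le> t0")
    case True then show ?thesis using that s by blast
  next
    case False
    then have "t0 \<le> s" by simp
    then have "G t0 \<le> G s" using Gf(3) monoD by blast
    then have "G t0 = \<beta>" using s t0 by simp
    then show ?thesis using that by blast
  qed
  have "h s' \<le> h t0" using s'(2) hmono monoD by blast
  then have hs': "h s' = 0" using ht0 h01[of s'] by simp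
  have q: "phiML \<beta> G h = \<beta>" using phi_eq[OF Gf(3) hmono, of s' \<beta>] s' hs' by simp
  have "\<exists>s. F s + h s = 1" by (rule sum_M[OF dense ends F hM]) auto
  then obtain s1 where s1: "F s1 + h s1 = 1" by blast
  have p: "phiML 1 F h = F s1" by (rule phi_eq[OF Ff(3) hmono s1])
  have "F s1 \<le> x + \<delta>"
  proof (rule ccontr)
    assume "\<not> F s1 \<le> x + \<delta>"
    then have big: "F s1 > x + \<delta>" by simp
    then have "\<not> s1 \<le> t0" using Ff(3) x_def dpos by (metis monoD not_le less_add_same_cancel1 order.strict_trans)
    then have "t0 \<le> s1" by simp
    then have "G t0 \<le> G s1" using Gf(3) monoD by blast
    then have "F s1 + G s1 - c > \<delta>" using big y_def c_def by simp
    then have "(F s1 + G s1 - c) / \<delta> > 1" using dpos by simp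
    then have "h s1 = 1" unfolding h_def \<theta>_def by simp
    then have "F s1 = 0" using s1 by simp
    then show False using big x01 dpos by simp
  qed
  moreover have "\<delta> \<le> (a - x) / 2" "\<delta> \<le> (1 - x) / 2" unfolding \<delta>_def by (rule min.cobounded1, rule min.cobounded2)
  then have "x + \<delta> < a" "x + \<delta> < 1" using x01 by (simp_all add: field_simps)
  ultimately have "phiML 1 F h < a" "phiML 1 F h < 1" using p by auto
  then show ?thesis using hM q ab by (intro bexI[of _ h]) auto
qed




definition uU :: "real \<Rightarrow> real \<Rightarrow> real \<Rightarrow> (nat \<Rightarrow> real) \<Rightarrow> real" where
  "uU a b c v = max 0 (min 1 (min (a - v 0) (min (v 1 - b) (v 1 - v 0 - c))))"

definition gform :: "real \<Rightarrow> real \<Rightarrow> real \<Rightarrow> rat \<Rightarrow> nat \<Rightarrow> rat \<Rightarrow> nat \<Rightarrow> form" where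
  "gform a b c \<alpha>1 n1 \<alpha>2 n2 = FSup 2 (Conn (uU a b c) [Phi \<alpha>1 n1 2, Phi \<alpha>2 n2 2])"

lemma gform_wf:
  assumes "0 \<le> \<alpha>1" "\<alpha>1 \<le> 1" "0 \<le> \<alpha>2" "\<alpha>2 \<le> 1"
  shows "wf_form (gform a b c \<alpha>1 n1 \<alpha>2 n2)"
proof -
  have "continuous_on UNIV (uU a b c)" unfolding uU_def
    by (intro continuous_intros continuous_on_product_coordinates)
  then have "continuous_on {v. \<forall>k. v k \<in> {0..1}} (uU a b c)" by (rule continuous_on_subset) auto
  moreover have "uU a b c v \<in> {0..1}" for v unfolding uU_def by auto
  ultimately show ?thesis using assms unfolding gform_def by simp
qed

lemma gform_fv:
  assumes "n1 < 2" "n2 < 2"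
  shows "fv (gform a b c \<alpha>1 n1 \<alpha>2 n2) \<subseteq> {..<2}"
  using assms unfolding gform_def by auto

lemma gform_pos:
  fixes e :: "nat \<Rightarrow> ('l::linorder_topology \<Rightarrow> real)"
  assumes ne: "(M_space :: ('l \<Rightarrow> real) set) \<noteq> {}" and n: "n1 \<noteq> 2" "n2 \<noteq> 2"
  shows "0 < eval (gform a b c \<alpha>1 n1 \<alpha>2 n2) e \<longleftrightarrow>
    (\<exists>h\<in>M_space. phiML (of_rat \<alpha>1) (e n1) h < a \<and> b < phiML (of_rat \<alpha>2) (e n2) h
       \<and> phiML (of_rat \<alpha>2) (e n2) h - phiML (of_rat \<alpha>1) (e n1) h > c)"
proof -
  define P1 where "P1 = (\<lambda>h. phiML (of_rat \<alpha>1) (e n1) h)"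
  define P2 where "P2 = (\<lambda>h. phiML (of_rat \<alpha>2) (e n2) h)"
  define W where "W = (\<lambda>h. max 0 (min 1 (min (a - P1 h) (min (P2 h - b) (P2 h - P1 h - c)))))"
  have ev: "eval (gform a b c \<alpha>1 n1 \<alpha>2 n2) e = (SUP h\<in>M_space. W h)"
    unfolding gform_def W_def P1_def P2_def using n by (simp add: uU_def)
  have bdd: "bdd_above (W ` M_space)" unfolding W_def bdd_above_def by (intro exI[of _ 1]) auto
  have "0 < (SUP h\<in>M_space. W h) \<longleftrightarrow> (\<exists>h\<in>M_space. 0 < W h)" by (rule less_cSUP_iff[OF ne bdd])
  moreover have "0 < W h \<longleftrightarrow> P1 h < a \<and> b < P2 h \<and> P2 h - P1 h > c" for h
    unfolding W_def by auto
  ultimately show ?thesis using ev P1_def P2_def by simp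
qed

lemma indisc2:
  fixes f :: "'i::linorder \<Rightarrow> ('l::linorder_topology \<Rightarrow> real)"
  assumes "indiscernible f" "wf_form \<phi>" "fv \<phi> \<subseteq> {..<2}" "i < j" "p < q"
  shows "eval \<phi> (\<lambda>k. f (if k = 0 then i else j)) = eval \<phi> (\<lambda>k. f (if k = 0 then p else q))"
proof -
  have sm: "strict_mono_on {..<2} (\<lambda>k::nat. if k = 0 then x else y)" if "x < y" for x y :: 'i
    unfolding strict_mono_on_def using that by auto
  from assms(1) have "\<forall>\<phi> n (ii :: nat \<Rightarrow> 'i) js. wf_form \<phi> \<and> fv \<phi> \<subseteq> {..<n} \<and>
        strict_mono_on {..<n} ii \<and> strict_mono_on {..<n} js \<longrightarrow>
        eval \<phi> (\<lambda>k. f (ii k)) = eval \<phi> (\<lambda>k. f (js k))" unfolding indiscernible_def by blast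
  then have "eval \<phi> (\<lambda>k. f ((\<lambda>k::nat. if k = 0 then i else j) k)) = eval \<phi> (\<lambda>k. f ((\<lambda>k::nat. if k = 0 then p else q) k))"
    using assms(2,3) sm[OF assms(4)] sm[OF assms(5)] by blast
  then show ?thesis by simp
qed




lemma im_swap: "(x, y) \<in> im G F \<longleftrightarrow> (y, x) \<in> im F G"
  unfolding im_def by auto

lemma im_sub:
  fixes f :: "'i::linorder \<Rightarrow> ('l::{linorder_topology, conditionally_complete_linorder} \<Rightarrow> real)"
    and lo hi :: 'l
  assumes dense: "\<forall>x y::'l. x < y \<longrightarrow> (\<exists>z. x < z \<and> z < y)"
    and ends: "\<forall>x. lo \<le> x \<and> x \<le> hi"
    and fM: "\<forall>k. f k \<in> M_space" and ind: "indiscernible f" and ij: "i < j" and pq: "p < q"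
  shows "im (f i) (f j) \<subseteq> im (f p) (f q)"
proof
  fix z assume z: "z \<in> im (f i) (f j)"
  obtain x y where xy: "z = (x, y)" by force
  have Fi: "f i \<in> M_space" and Fj: "f j \<in> M_space" and Fp: "f p \<in> M_space" and Fq: "f q \<in> M_space"
    using fM by auto
  note Fif = M_facts[OF Fi ends] and Fjf = M_facts[OF Fj ends]
    and Fpf = M_facts[OF Fp ends] and Fqf = M_facts[OF Fq ends]
  obtain t1 where t1: "f i t1 = x" "f j t1 = y" using z xy unfolding im_def by auto
  have x01: "0 \<le> x" "x \<le> 1" and y01: "0 \<le> y" "y \<le> 1" using t1 Fif Fjf by auto
  have xyin: "(x, y) \<in> im (f i) (f j)" using z xy by simp
  define ei where "ei = (\<lambda>k::nat. f (if k = 0 then i else j))"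
  define epq where "epq = (\<lambda>k::nat. f (if k = 0 then p else q))"
  have Mne: "(M_space :: ('l \<Rightarrow> real) set) \<noteq> {}" using fM by blast
  have noU: "\<not> (\<exists>t. f p t < x \<and> f q t > y)"
  proof
    assume "\<exists>t. f p t < x \<and> f q t > y"
    then obtain t where t: "f p t < x" "f q t > y" by blast
    obtain \<beta> where be: "y < \<beta>" "\<beta> < f q t" "\<beta> \<in> \<rat>" using Rats_dense_in_real[OF t(2)] by blast
    obtain r :: rat where r: "\<beta> = of_rat r" using be(3) Rats_cases by blast
    have b1: "\<beta> \<le> 1" using be Fqf(6)[of t] by simp
    have "0 \<le> real_of_rat r" using be(1) y01(1) r by linarith
    moreover have "real_of_rat r \<le> 1" using b1 r by simp
    ultimately have "0 \<le> r" "r \<le> 1" by (simp_all add: zero_le_of_rat_iff)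
    note wf = gform_wf[of 1 r, OF _ _ this] and fvv = gform_fv[of 0 1]
    have "\<exists>h\<in>M_space. phiML 1 (f p) h < x \<and> y < phiML \<beta> (f q) h \<and> phiML \<beta> (f q) h - phiML 1 (f p) h > \<beta> - 1"
      by (rule steep_U[OF dense ends Fp Fq t(1)]) (use be b1 x01 y01 in auto)
    then have "0 < eval (gform x y (\<beta> - 1) 1 0 r 1) epq"
      using gform_pos[OF Mne, of 0 1] r unfolding epq_def by simp
    moreover have "eval (gform x y (\<beta> - 1) 1 0 r 1) ei = eval (gform x y (\<beta> - 1) 1 0 r 1) epq"
      unfolding ei_def epq_def by (rule indisc2[OF ind wf fvv ij pq]) auto
    ultimately have "0 < eval (gform x y (\<beta> - 1) 1 0 r 1) ei" by simp
    then obtain h where h: "h \<in> M_space" "phiML 1 (f i) h < x" "y < phiML \<beta> (f j) h"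
      "phiML \<beta> (f j) h - phiML 1 (f i) h > \<beta> - 1"
      using gform_pos[OF Mne, of 0 1] r unfolding ei_def by auto
    obtain s where s: "f i s \<le> phiML 1 (f i) h" "f j s = phiML \<beta> (f j) h"
      using R_U[OF dense ends Fi Fj h(1), of \<beta>] h(4) be b1 y01 by auto
    have "(f i s, f j s) \<in> im (f i) (f j)" unfolding im_def by auto
    from chain[OF Fif(3) Fjf(3) this xyin] show False using s h by auto
  qed
  have noV: "\<not> (\<exists>t. f p t > x \<and> f q t < y)"
  proof
    assume "\<exists>t. f p t > x \<and> f q t < y"
    then obtain t where t: "f p t > x" "f q t < y" by blast
    obtain \<beta> where be: "x < \<beta>" "\<beta> < f p t" "\<beta> \<in> \<rat>" using Rats_dense_in_real[OF t(1)] by blast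
    obtain r :: rat where r: "\<beta> = of_rat r" using be(3) Rats_cases by blast
    have b1: "\<beta> \<le> 1" using be Fpf(6)[of t] by simp
    have "0 \<le> real_of_rat r" using be(1) x01(1) r by linarith
    moreover have "real_of_rat r \<le> 1" using b1 r by simp
    ultimately have "0 \<le> r" "r \<le> 1" by (simp_all add: zero_le_of_rat_iff)
    note wf = gform_wf[of 1 r, OF _ _ this] and fvv = gform_fv[of 1 0]
    have "\<exists>h\<in>M_space. phiML 1 (f q) h < y \<and> x < phiML \<beta> (f p) h \<and> phiML \<beta> (f p) h - phiML 1 (f q) h > \<beta> - 1"
      by (rule steep_U[OF dense ends Fq Fp t(2)]) (use be b1 x01 y01 in auto)
    then have "0 < eval (gform y x (\<beta> - 1) 1 1 r 0) epq"
      using gform_pos[OF Mne, of 1 0] r unfolding epq_def by simp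
    moreover have "eval (gform y x (\<beta> - 1) 1 1 r 0) ei = eval (gform y x (\<beta> - 1) 1 1 r 0) epq"
      unfolding ei_def epq_def by (rule indisc2[OF ind wf fvv ij pq]) auto
    ultimately have "0 < eval (gform y x (\<beta> - 1) 1 1 r 0) ei" by simp
    then obtain h where h: "h \<in> M_space" "phiML 1 (f j) h < y" "x < phiML \<beta> (f i) h"
      "phiML \<beta> (f i) h - phiML 1 (f j) h > \<beta> - 1"
      using gform_pos[OF Mne, of 1 0] r unfolding ei_def by auto
    obtain s where s: "f j s \<le> phiML 1 (f j) h" "f i s = phiML \<beta> (f i) h"
      using R_U[OF dense ends Fj Fi h(1), of \<beta>] h(4) be b1 x01 by auto
    have "(f i s, f j s) \<in> im (f i) (f j)" unfolding im_def by auto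
    from chain[OF Fif(3) Fjf(3) this xyin] show False using s h by auto
  qed
  have "(x, y) \<in> im (f p) (f q)" by (rule charac[OF dense ends Fp Fq x01 y01 noU noV])
  then show "z \<in> im (f p) (f q)" using xy by simp
qed

theorem mainTheorem19:
  fixes f :: "'i::linorder \<Rightarrow> ('l::{linorder_topology, conditionally_complete_linorder} \<Rightarrow> real)"
    and i j :: 'i and a b :: real
  assumes "lin_cont_endpoints TYPE('l)"
    and "\<forall>k. f k \<in> M_space"
    and "indiscernible f"
    and "\<exists>p q r::'i. p < q \<and> q < r"
    and "i < j"
    and "(a, b) \<in> im (f i) (f j)"
  shows "(a, a) \<in> im (f i) (f j) \<or> (b, b) \<in> im (f i) (f j)"
proof -
  have dense: "\<forall>x y::'l. x < y \<longrightarrow> (\<exists>z. x < z \<and> z < y)"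
    using assms(1) unfolding lin_cont_endpoints_def by blast
  obtain lo hi :: 'l where ends: "\<forall>x. lo \<le> x \<and> x \<le> hi"
    using assms(1) unfolding lin_cont_endpoints_def by blast
  obtain p q r :: 'i where pqr: "p < q" "q < r" using assms(4) by blast
  have pr: "p < r" using pqr by simp
  note sub = im_sub[OF dense ends assms(2) assms(3)]
  have Fp: "f p \<in> M_space" and Fq: "f q \<in> M_space" and Fr: "f r \<in> M_space" using assms(2) by auto
  show ?thesis
  proof (cases "a = b")
    case True then show ?thesis using assms(6) by simp
  next
    case False
    then consider "a < b" | "b < a" by linarith
    then show ?thesis
    proof cases
      case 1
      have ab: "(a, b) \<in> im (f p) (f q)" using sub[OF assms(5) pqr(1)] assms(6) by blast
      have T1: "im (f p) (f r) \<subseteq> im (f p) (f q)" by (rule sub[OF pr pqr(1)])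
      have T2: "im (f q) (f r) \<subseteq> im (f p) (f q)" by (rule sub[OF pqr(2) pqr(1)])
      have "(a, a) \<in> im (f p) (f q) \<or> (b, b) \<in> im (f p) (f q)"
        by (rule core[OF dense ends Fp Fq Fr T1 T2 ab 1])
      then show ?thesis using sub[OF pqr(1) assms(5)] by blast
    next
      case 2
      have ab: "(b, a) \<in> im (f r) (f q)" using sub[OF assms(5) pqr(2)] assms(6) im_swap by blast
      have T1: "im (f r) (f p) \<subseteq> im (f r) (f q)"
      proof
        fix z assume "z \<in> im (f r) (f p)"
        moreover obtain x y where "z = (x, y)" by force
        ultimately have "(y, x) \<in> im (f p) (f r)" using im_swap by metis
        then have "(y, x) \<in> im (f q) (f r)" using sub[OF pr pqr(2)] by blast
        then show "z \<in> im (f r) (f q)" using im_swap \<open>z = (x, y)\<close> by metis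
      qed
      have T2: "im (f q) (f p) \<subseteq> im (f r) (f q)"
      proof
        fix z assume "z \<in> im (f q) (f p)"
        moreover obtain x y where "z = (x, y)" by force
        ultimately have "(y, x) \<in> im (f p) (f q)" using im_swap by metis
        then have "(y, x) \<in> im (f q) (f r)" using sub[OF pqr(1) pqr(2)] by blast
        then show "z \<in> im (f r) (f q)" using im_swap \<open>z = (x, y)\<close> by metis
      qed
      have "(b, b) \<in> im (f r) (f q) \<or> (a, a) \<in> im (f r) (f q)"
        by (rule core[OF dense ends Fr Fq Fp T1 T2 ab 2])
      then have "(b, b) \<in> im (f q) (f r) \<or> (a, a) \<in> im (f q) (f r)" using im_swap by metis
      then show ?thesis using sub[OF pqr(2) assms(5)] by blast
    qed
  qed
qed


end
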